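(* Let $(X,r)$ be a non-degenerate set-theoretic solution of the Yang–Baxter equation such that its structure brace $G(X,r)$ is soluble, and regard $X$ as a subset of $G(X,r)$ via the canonical map $\iota$ (assumed injective). Suppose $G(X,r)$ has a chain $G(X,r)=I_0\supseteq I_1\supseteq\cdots\supseteq I_n=0$ with each $I_i$ an ideal of the brace $I_{i-1}$ and $I_{i-1}/I_i$ abelian, such that $X\cap I_{n-1}\neq\emptyset$. Then $(X,r)$ is multidecomposable.
   Context: A skew left brace (brace) is a set $B$ with two group structures $(B,+)$ and $(B,\cdot)$ such that $a(b+c)=ab-a+ac$; $\lambda_a(b)=-a+ab$. An ideal is a subset that is a normal subgroup of both groups and is $\lambda_b$-invariant for all $b$. For ideals $I,J$, $[I,J]$ is the smallest ideal containing $[I,J]_+$, $[I,J]_\cdot$ and all $ij-(i+j)$; a brace is abelian if $[B,B]=0$ (i.e. $ab=a+b=b+a$ for all $a,b$); it is soluble if it has a chain as in the claim. A solution $(X,r)$ is a set with a bijection $r:X\times X\to X\times X$ satisfying $r_{12}r_{23}r_{12}=r_{23}r_{12}r_{23}$, with both components of $r$ bijective; write $r(x,y)=(\lambda_x(y),\rho_y(x))$. $G(X,r)$ is the group $\langle x\in X\mid xy=uv \text{ whenever } r(x,y)=(u,v)\rangle$; it carries a brace structure (with this as multiplicative group) whose associated solution $r_G(g,h)=(\lambda^G_g(h),\lambda^G_g(h)^{-1}gh)$ satisfies $r_G\circ(\iota\times\iota)=(\iota\times\iota)\circ r$, where $\iota:X\to G(X,r)$ is the canonical map. For a partition $\mathcal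 P=\{X_i\}$ of $X$, $(X,r)$ is $\mathcal P$-decomposable if $r(X_i\times X_j)=X_j\times X_i$ for all $i,j$. $(X,r)$ is multidecomposable if there is a chain $X=X_0\supseteq X_1\supseteq\cdots\supseteq X_n$ with $|X_n|=1$ such that for each $0\le i\le n-1$ there is a partition $\mathcal P_i$ of $X_i$ with $X_{i+1}\in\mathcal P_i$ and $(X_i,r|_{X_i\times X_i})$ $\mathcal P_i$-decomposable. *)

theory Defs
  imports "HOL-Algebra.Coset"
begin

text \<open>A solution on the set X is a map r on X x X (values outside X x X irrelevant).
  We write r(x,y) = (lambda_x(y), rho_y(x)).\<close>

definition sol_lambda :: "('a \<times> 'a \<Rightarrow> 'a \<times> 'a) \<Rightarrow> 'a \<Rightarrow> 'a \<Rightarrow> 'a" where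
  "sol_lambda r x y = fst (r (x, y))"

definition sol_rho :: "('a \<times> 'a \<Rightarrow> 'a \<times> 'a) \<Rightarrow> 'a \<Rightarrow> 'a \<Rightarrow> 'a" where
  "sol_rho r y x = snd (r (x, y))"

definition r12 :: "('a \<times> 'a \<Rightarrow> 'a \<times> 'a) \<Rightarrow> 'a \<times> 'a \<times> 'a \<Rightarrow> 'a \<times> 'a \<times> 'a" where
  "r12 r t = (case t of (x, y, z) \<Rightarrow> (let (u, v) = r (x, y) in (u, v, z)))"

definition r23 :: "('a \<times> 'a \<Rightarrow> 'a \<times> 'a) \<Rightarrow> 'a \<times> 'a \<times> 'a \<Rightarrow> 'a \<times> 'a \<times> 'a" where
  "r23 r t = (case t of (x, y, z) \<Rightarrow> (let (u, v) = r (y, z) in (x, u, v)))"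

definition nondeg_solution :: "'a set \<Rightarrow> ('a \<times> 'a \<Rightarrow> 'a \<times> 'a) \<Rightarrow> bool" where
  "nondeg_solution X r \<longleftrightarrow>
     bij_betw r (X \<times> X) (X \<times> X) \<and>
     (\<forall>x\<in>X. \<forall>y\<in>X. \<forall>z\<in>X.
        r12 r (r23 r (r12 r (x, y, z))) = r23 r (r12 r (r23 r (x, y, z)))) \<and>
     (\<forall>x\<in>X. bij_betw (sol_lambda r x) X X) \<and>
     (\<forall>y\<in>X. bij_betw (sol_rho r y) X X)"

definition is_partition :: "'a set set \<Rightarrow> 'a set \<Rightarrow> bool" where
  "is_partition P Y \<longleftrightarrow> \<Union>P = Y \<and> {} \<notin> P \<and>
     (\<forall>A\<in>P. \<forall>B\<in>P. A \<noteq> B \<longrightarrow> A \<inter> B = {})"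

definition P_decomposable :: "'a set \<Rightarrow> ('a \<times> 'a \<Rightarrow> 'a \<times> 'a) \<Rightarrow> 'a set set \<Rightarrow> bool" where
  "P_decomposable Y r P \<longleftrightarrow> is_partition P Y \<and>
     (\<forall>A\<in>P. \<forall>B\<in>P. r ` (A \<times> B) = B \<times> A)"

definition multidecomposable :: "'a set \<Rightarrow> ('a \<times> 'a \<Rightarrow> 'a \<times> 'a) \<Rightarrow> bool" where
  "multidecomposable X r \<longleftrightarrow>
     (\<exists>(n::nat) (Xs :: nat \<Rightarrow> 'a set). Xs 0 = X \<and> card (Xs n) = 1 \<and>
        (\<forall>i<n. Xs (Suc i) \<subseteq> Xs i \<and>
           (\<exists>P. P_decomposable (Xs i) r P \<and> Xs (Suc i) \<in> P)))"

section \<open>Skew braces (HOL-Algebra records: A additive, M multiplicative)\<close>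

definition skew_brace :: "'b monoid \<Rightarrow> 'b monoid \<Rightarrow> bool" where
  "skew_brace A M \<longleftrightarrow> group A \<and> group M \<and> carrier A = carrier M \<and>
     (\<forall>a\<in>carrier M. \<forall>b\<in>carrier M. \<forall>c\<in>carrier M.
        a \<otimes>\<^bsub>M\<^esub> (b \<otimes>\<^bsub>A\<^esub> c)
        = (a \<otimes>\<^bsub>M\<^esub> b) \<otimes>\<^bsub>A\<^esub> inv\<^bsub>A\<^esub> a \<otimes>\<^bsub>A\<^esub> (a \<otimes>\<^bsub>M\<^esub> c))"

definition brace_lambda :: "'b monoid \<Rightarrow> 'b monoid \<Rightarrow> 'b \<Rightarrow> 'b \<Rightarrow> 'b" where
  "brace_lambda A M a b = inv\<^bsub>A\<^esub> a \<otimes>\<^bsub>A\<^esub> (a \<otimes>\<^bsub>M\<^esub> b)"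

definition brace_solution :: "'b monoid \<Rightarrow> 'b monoid \<Rightarrow> 'b \<times> 'b \<Rightarrow> 'b \<times> 'b" where
  "brace_solution A M p = (case p of (g, h) \<Rightarrow>
     (brace_lambda A M g h,
      inv\<^bsub>M\<^esub> (brace_lambda A M g h) \<otimes>\<^bsub>M\<^esub> g \<otimes>\<^bsub>M\<^esub> h))"

definition brace_ideal :: "'b monoid \<Rightarrow> 'b monoid \<Rightarrow> 'b set \<Rightarrow> bool" where
  "brace_ideal A M I \<longleftrightarrow> normal I A \<and> normal I M \<and>
     (\<forall>b\<in>carrier M. \<forall>i\<in>I. brace_lambda A M b i \<in> I)"

text \<open>The quotient brace (carrier J)/I is abelian: for all a,b in J,
  ab + I = (a+b) + I = (b+a) + I (cosets of the ideal I).\<close>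
definition abelian_quotient :: "'b monoid \<Rightarrow> 'b monoid \<Rightarrow> 'b set \<Rightarrow> bool" where
  "abelian_quotient A M I \<longleftrightarrow>
     (\<forall>a\<in>carrier M. \<forall>b\<in>carrier M.
        inv\<^bsub>A\<^esub> (a \<otimes>\<^bsub>A\<^esub> b) \<otimes>\<^bsub>A\<^esub> (a \<otimes>\<^bsub>M\<^esub> b) \<in> I \<and>
        inv\<^bsub>A\<^esub> (b \<otimes>\<^bsub>A\<^esub> a) \<otimes>\<^bsub>A\<^esub> (a \<otimes>\<^bsub>A\<^esub> b) \<in> I)"

definition soluble_chain :: "'b monoid \<Rightarrow> 'b monoid \<Rightarrow> (nat \<Rightarrow> 'b set) \<Rightarrow> nat \<Rightarrow> bool" where
  "soluble_chain A M I n \<longleftrightarrow> I 0 = carrier M \<and> I n = {\<one>\<^bsub>M\<^esub>} \<and>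
     (\<forall>i. 1 \<le> i \<and> i \<le> n \<longrightarrow>
        I i \<subseteq> I (i - 1) \<and>
        brace_ideal (A\<lparr>carrier := I (i - 1)\<rparr>) (M\<lparr>carrier := I (i - 1)\<rparr>) (I i) \<and>
        abelian_quotient (A\<lparr>carrier := I (i - 1)\<rparr>) (M\<lparr>carrier := I (i - 1)\<rparr>) (I i))"

definition soluble_brace :: "'b monoid \<Rightarrow> 'b monoid \<Rightarrow> bool" where
  "soluble_brace A M \<longleftrightarrow> (\<exists>I n. soluble_chain A M I n)"

text \<open>Words over X and X^{-1}: (x, True) is x, (x, False) is x^{-1}.\<close>
definition words_on :: "'a set \<Rightarrow> ('a \<times> bool) list set" where
  "words_on X = {w. \<forall>p\<in>set w. fst p \<in> X}"

inductive sg_eq :: "'a set \<Rightarrow> ('a \<times> 'a \<Rightarrow> 'a \<times> 'a) \<Rightarrow> ('a \<times> bool) list \<Rightarrow> ('a \<times> bool) list \<Rightarrow> bool"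
  for X r where
  sg_refl: "w \<in> words_on X \<Longrightarrow> sg_eq X r w w"
| sg_sym: "sg_eq X r w w' \<Longrightarrow> sg_eq X r w' w"
| sg_trans: "sg_eq X r w w' \<Longrightarrow> sg_eq X r w' w'' \<Longrightarrow> sg_eq X r w w''"
| sg_cancel: "u \<in> words_on X \<Longrightarrow> v \<in> words_on X \<Longrightarrow> x \<in> X \<Longrightarrow>
     sg_eq X r (u @ [(x, b), (x, \<not> b)] @ v) (u @ v)"
| sg_rel: "u \<in> words_on X \<Longrightarrow> v \<in> words_on X \<Longrightarrow> x \<in> X \<Longrightarrow> y \<in> X \<Longrightarrow>
     sg_eq X r (u @ [(x, True), (y, True)] @ v)
               (u @ [(fst (r (x, y)), True), (snd (r (x, y)), True)] @ v)"

definition sg_class :: "'a set \<Rightarrow> ('a \<times> 'a \<Rightarrow> 'a \<times> 'a) \<Rightarrow> ('a \<times> bool) list \<Rightarrow> ('a \<times> bool) list set" where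
  "sg_class X r w = {w'. sg_eq X r w w'}"

definition structure_group :: "'a set \<Rightarrow> ('a \<times> 'a \<Rightarrow> 'a \<times> 'a) \<Rightarrow> ('a \<times> bool) list set monoid" where
  "structure_group X r =
     \<lparr>carrier = sg_class X r ` words_on X,
      mult = (\<lambda>C D. sg_class X r ((SOME w. w \<in> C) @ (SOME w. w \<in> D))),
      one = sg_class X r []\<rparr>"

definition sg_iota :: "'a set \<Rightarrow> ('a \<times> 'a \<Rightarrow> 'a \<times> 'a) \<Rightarrow> 'a \<Rightarrow> ('a \<times> bool) list set" where
  "sg_iota X r x = sg_class X r [(x, True)]"

end

theory Submission imports Defs begin

lemma (in normal) eqv_sym:
  assumes "a \<in> carrier G" "b \<in> carrier G" "inv a \<otimes> b \<in> H"
  shows "inv b \<otimes> a \<in> H"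
proof -
  have "inv (inv a \<otimes> b) \<in> H" using assms by simp
  also have "inv (inv a \<otimes> b) = inv b \<otimes> a" using assms by (simp add: inv_mult_group)
  finally show ?thesis .
qed

lemma (in normal) eqv_trans:
  assumes "a \<in> carrier G" "b \<in> carrier G" "c \<in> carrier G" "inv a \<otimes> b \<in> H" "inv b \<otimes> c \<in> H"
  shows "inv a \<otimes> c \<in> H"
proof -
  have "(inv a \<otimes> b) \<otimes> (inv b \<otimes> c) \<in> H" using assms by simp
  also have "(inv a \<otimes> b) \<otimes> (inv b \<otimes> c) = inv a \<otimes> c" using assms
    by (simp add: m_assoc[symmetric]) (simp add: m_assoc)
  finally show ?thesis .
qed

lemma (in normal) eqv_mult:
  assumes "a \<in> carrier G" "b \<in> carrier G" "a' \<in> carrier G" "b' \<in> carrier G"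
    "inv a \<otimes> a' \<in> H" "inv b \<otimes> b' \<in> H"
  shows "inv (a \<otimes> b) \<otimes> (a' \<otimes> b') \<in> H"
proof -
  have "inv b \<otimes> (inv a \<otimes> a') \<otimes> b \<in> H" using assms inv_op_closed1 by simp
  hence "(inv b \<otimes> (inv a \<otimes> a') \<otimes> b) \<otimes> (inv b \<otimes> b') \<in> H" using assms by simp
  also have "(inv b \<otimes> (inv a \<otimes> a') \<otimes> b) \<otimes> (inv b \<otimes> b') = inv (a \<otimes> b) \<otimes> (a' \<otimes> b')"
    using assms by (simp add: inv_mult_group m_assoc) (simp add: m_assoc[symmetric])
  finally show ?thesis .
qed

lemma (in normal) eqv_inv:
  assumes "a \<in> carrier G" "a' \<in> carrier G" "inv a \<otimes> a' \<in> H"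
  shows "inv (inv a) \<otimes> inv a' \<in> H"
proof -
  have "a \<otimes> (inv a \<otimes> a') \<otimes> inv a \<in> H" using assms inv_op_closed2 by simp
  hence "inv (a \<otimes> (inv a \<otimes> a') \<otimes> inv a) \<in> H" using assms by simp
  also have "inv (a \<otimes> (inv a \<otimes> a') \<otimes> inv a) = a \<otimes> inv a'"
    using assms by (simp add: inv_mult_group m_assoc)
  finally show ?thesis using assms by simp
qed

lemma coincide:
  assumes gA: "group GA" and gM: "group GM" and cJ: "carrier GA = carrier GM"
    and nA: "normal K GA" and nM: "normal K GM" and ab: "abelian_quotient GA GM K"
    and a: "a \<in> carrier GM" and b: "b \<in> carrier GM"
  shows "inv\<^bsub>GA\<^esub> a \<otimes>\<^bsub>GA\<^esub> b \<in> K \<longleftrightarrow> inv\<^bsub>GM\<^esub> a \<otimes>\<^bsub>GM\<^esub> b \<in> K"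
proof -
  interpret A: normal K GA by fact
  interpret M: normal K GM by fact
  define c where "c = inv\<^bsub>GM\<^esub> a \<otimes>\<^bsub>GM\<^esub> b"
  have c: "c \<in> carrier GM" using a b c_def by simp
  have bc: "b = a \<otimes>\<^bsub>GM\<^esub> c" using a b c_def by (simp add: M.m_assoc[symmetric])
  define k where "k = inv\<^bsub>GA\<^esub> (a \<otimes>\<^bsub>GA\<^esub> c) \<otimes>\<^bsub>GA\<^esub> (a \<otimes>\<^bsub>GM\<^esub> c)"
  have k: "k \<in> K" using ab a c unfolding abelian_quotient_def k_def by blast
  have kc: "k \<in> carrier GA" using k A.subset by blast
  have "b = (a \<otimes>\<^bsub>GA\<^esub> c) \<otimes>\<^bsub>GA\<^esub> k"
  proof -
    have ac: "a \<otimes>\<^bsub>GM\<^esub> c \<in> carrier GA" by (metis a c cJ A.m_closed M.m_closed)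
    have ac2: "a \<otimes>\<^bsub>GA\<^esub> c \<in> carrier GA" by (metis a c cJ A.m_closed M.m_closed)
    show ?thesis using ac ac2 bc unfolding k_def by (simp add: A.m_assoc[symmetric])
  qed
  moreover have aA: "a \<in> carrier GA" and cA: "c \<in> carrier GA" using a c cJ by auto
  ultimately have e: "inv\<^bsub>GA\<^esub> a \<otimes>\<^bsub>GA\<^esub> b = c \<otimes>\<^bsub>GA\<^esub> k"
    using kc by (simp add: A.m_assoc[symmetric])
  have "c \<otimes>\<^bsub>GA\<^esub> k \<in> K \<longleftrightarrow> c \<in> K"
  proof
    assume "c \<otimes>\<^bsub>GA\<^esub> k \<in> K"
    hence "(c \<otimes>\<^bsub>GA\<^esub> k) \<otimes>\<^bsub>GA\<^esub> inv\<^bsub>GA\<^esub> k \<in> K" using k by simp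
    thus "c \<in> K" using cA kc by (simp add: A.m_assoc)
  next
    assume "c \<in> K" thus "c \<otimes>\<^bsub>GA\<^esub> k \<in> K" using k by simp
  qed
  thus ?thesis using e c_def by simp
qed

lemma level:
  assumes gA: "group GA" and gM: "group GM" and cJ: "carrier GA = carrier GM"
    and nA: "normal K GA" and nM: "normal K GM" and ab: "abelian_quotient GA GM K"
    and x: "x \<in> carrier GM" and y: "y \<in> carrier GM"
    and u: "u = inv\<^bsub>GA\<^esub> x \<otimes>\<^bsub>GA\<^esub> (x \<otimes>\<^bsub>GM\<^esub> y)"
    and v: "v = inv\<^bsub>GM\<^esub> u \<otimes>\<^bsub>GM\<^esub> x \<otimes>\<^bsub>GM\<^esub> y"
  shows "inv\<^bsub>GA\<^esub> y \<otimes>\<^bsub>GA\<^esub> u \<in> K" "inv\<^bsub>GA\<^esub> x \<otimes>\<^bsub>GA\<^esub> v \<in> K"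
proof -
  interpret A: normal K GA by fact
  interpret M: normal K GM by fact
  have xA: "x \<in> carrier GA" and yA: "y \<in> carrier GA" using x y cJ by auto
  have xyA: "x \<otimes>\<^bsub>GM\<^esub> y \<in> carrier GA" using x y cJ by (metis M.m_closed)
  have uA: "u \<in> carrier GA" using u xA xyA by simp
  hence uM: "u \<in> carrier GM" using cJ by simp
  have "inv\<^bsub>GA\<^esub> y \<otimes>\<^bsub>GA\<^esub> u = inv\<^bsub>GA\<^esub> (x \<otimes>\<^bsub>GA\<^esub> y) \<otimes>\<^bsub>GA\<^esub> (x \<otimes>\<^bsub>GM\<^esub> y)"
    using xA yA xyA u by (simp add: A.inv_mult_group A.m_assoc)
  also have "\<dots> \<in> K" using ab x y unfolding abelian_quotient_def by blast
  finally show p1: "inv\<^bsub>GA\<^esub> y \<otimes>\<^bsub>GA\<^esub> u \<in> K" .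
  have yu: "inv\<^bsub>GM\<^esub> y \<otimes>\<^bsub>GM\<^esub> u \<in> K" using coincide[OF assms(1-6) y uM] p1 by simp
  have yxM: "y \<otimes>\<^bsub>GM\<^esub> x \<in> carrier GM" "x \<otimes>\<^bsub>GM\<^esub> y \<in> carrier GM" using x y by auto
  have yxA: "y \<otimes>\<^bsub>GM\<^esub> x \<in> carrier GA" using yxM cJ by simp
  have s1: "inv\<^bsub>GA\<^esub> (x \<otimes>\<^bsub>GA\<^esub> y) \<otimes>\<^bsub>GA\<^esub> (x \<otimes>\<^bsub>GM\<^esub> y) \<in> K"
    using ab x y unfolding abelian_quotient_def by blast
  have s2: "inv\<^bsub>GA\<^esub> (x \<otimes>\<^bsub>GA\<^esub> y) \<otimes>\<^bsub>GA\<^esub> (y \<otimes>\<^bsub>GA\<^esub> x) \<in> K"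
    using ab x y unfolding abelian_quotient_def by blast
  have s3: "inv\<^bsub>GA\<^esub> (y \<otimes>\<^bsub>GA\<^esub> x) \<otimes>\<^bsub>GA\<^esub> (y \<otimes>\<^bsub>GM\<^esub> x) \<in> K"
    using ab x y unfolding abelian_quotient_def by blast
  have s1': "inv\<^bsub>GA\<^esub> (x \<otimes>\<^bsub>GM\<^esub> y) \<otimes>\<^bsub>GA\<^esub> (x \<otimes>\<^bsub>GA\<^esub> y) \<in> K"
    using A.eqv_sym[OF _ xyA s1] xA yA by simp
  have "inv\<^bsub>GA\<^esub> (x \<otimes>\<^bsub>GM\<^esub> y) \<otimes>\<^bsub>GA\<^esub> (y \<otimes>\<^bsub>GA\<^esub> x) \<in> K"
    using A.eqv_trans[OF xyA _ _ s1' s2] xA yA by simp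
  hence "inv\<^bsub>GA\<^esub> (x \<otimes>\<^bsub>GM\<^esub> y) \<otimes>\<^bsub>GA\<^esub> (y \<otimes>\<^bsub>GM\<^esub> x) \<in> K"
    using A.eqv_trans[OF xyA _ yxA _ s3] xA yA by simp
  hence c: "inv\<^bsub>GM\<^esub> (x \<otimes>\<^bsub>GM\<^esub> y) \<otimes>\<^bsub>GM\<^esub> (y \<otimes>\<^bsub>GM\<^esub> x) \<in> K"
    using coincide[OF assms(1-6) yxM(2) yxM(1)] by simp
  have uy: "inv\<^bsub>GM\<^esub> u \<otimes>\<^bsub>GM\<^esub> y \<in> K" using M.eqv_sym[OF y uM yu] .
  have iuy: "inv\<^bsub>GM\<^esub> (inv\<^bsub>GM\<^esub> u) \<otimes>\<^bsub>GM\<^esub> inv\<^bsub>GM\<^esub> y \<in> K"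
    using M.eqv_inv[OF uM y uy] .
  have "inv\<^bsub>GM\<^esub> (inv\<^bsub>GM\<^esub> u \<otimes>\<^bsub>GM\<^esub> (x \<otimes>\<^bsub>GM\<^esub> y)) \<otimes>\<^bsub>GM\<^esub> (inv\<^bsub>GM\<^esub> y \<otimes>\<^bsub>GM\<^esub> (y \<otimes>\<^bsub>GM\<^esub> x)) \<in> K"
    using M.eqv_mult[OF _ yxM(2) _ yxM(1) iuy c] uM y by simp
  moreover have "inv\<^bsub>GM\<^esub> u \<otimes>\<^bsub>GM\<^esub> (x \<otimes>\<^bsub>GM\<^esub> y) = v" using v uM x y by (simp add: M.m_assoc)
  moreover have "inv\<^bsub>GM\<^esub> y \<otimes>\<^bsub>GM\<^esub> (y \<otimes>\<^bsub>GM\<^esub> x) = x" using x y by (simp add: M.m_assoc[symmetric])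
  ultimately have vx: "inv\<^bsub>GM\<^esub> v \<otimes>\<^bsub>GM\<^esub> x \<in> K" by simp
  have vM: "v \<in> carrier GM" using v uM x y by simp
  have "inv\<^bsub>GM\<^esub> x \<otimes>\<^bsub>GM\<^esub> v \<in> K" using M.eqv_sym[OF vM x vx] .
  thus "inv\<^bsub>GA\<^esub> x \<otimes>\<^bsub>GA\<^esub> v \<in> K" using coincide[OF assms(1-6) x vM] by simp
qed

lemma classes_decomp:
  fixes R :: "'a \<Rightarrow> 'a \<Rightarrow> bool"
  assumes rf: "\<forall>x\<in>Y. R x x"
    and sy: "\<forall>x\<in>Y. \<forall>y\<in>Y. R x y \<longrightarrow> R y x"
    and tr: "\<forall>x\<in>Y. \<forall>y\<in>Y. \<forall>z\<in>Y. R x y \<longrightarrow> R y z \<longrightarrow> R x z"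
    and cl: "\<forall>x\<in>Y. \<forall>y\<in>Y. fst (r (x, y)) \<in> Y \<and> snd (r (x, y)) \<in> Y \<and>
               R y (fst (r (x, y))) \<and> R x (snd (r (x, y)))"
    and su: "\<forall>c\<in>Y. \<forall>b\<in>Y. \<exists>x\<in>Y. \<exists>y\<in>Y. r (x, y) = (c, b)"
  shows "P_decomposable Y r ((\<lambda>x. {y\<in>Y. R x y}) ` Y)"
  unfolding P_decomposable_def is_partition_def
proof (intro conjI ballI impI)
  show "\<Union> ((\<lambda>x. {y \<in> Y. R x y}) ` Y) = Y" using rf by blast
  show "{} \<notin> (\<lambda>x. {y \<in> Y. R x y}) ` Y" using rf by blast
next
  fix A B assume "A \<in> (\<lambda>x. {y \<in> Y. R x y}) ` Y" "B \<in> (\<lambda>x. {y \<in> Y. R x y}) ` Y" "A \<noteq> B"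
  then obtain a b where a: "a \<in> Y" "A = {y \<in> Y. R a y}" and b: "b \<in> Y" "B = {y \<in> Y. R b y}" by blast
  show "A \<inter> B = {}"
  proof (rule ccontr)
    assume "A \<inter> B \<noteq> {}"
    then obtain z where z: "z \<in> Y" "R a z" "R b z" using a b by blast
    have "R a b" using z a b sy tr by meson
    hence "A = B" using a b sy tr by blast
    thus False using \<open>A \<noteq> B\<close> by simp
  qed
next
  fix A B assume "A \<in> (\<lambda>x. {y \<in> Y. R x y}) ` Y" "B \<in> (\<lambda>x. {y \<in> Y. R x y}) ` Y"
  then obtain a b where a: "a \<in> Y" "A = {y \<in> Y. R a y}" and b: "b \<in> Y" "B = {y \<in> Y. R b y}" by blast
  show "r ` (A \<times> B) = B \<times> A"
  proof
    show "r ` (A \<times> B) \<subseteq> B \<times> A"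
    proof
      fix p assume "p \<in> r ` (A \<times> B)"
      then obtain x y where xy: "x \<in> A" "y \<in> B" "p = r (x, y)" by blast
      have "x \<in> Y" "y \<in> Y" "R a x" "R b y" using xy a b by auto
      moreover have "fst p \<in> Y" "snd p \<in> Y" "R y (fst p)" "R x (snd p)" using cl xy calculation by auto
      ultimately have "R b (fst p)" "R a (snd p)" using tr a b by blast+
      thus "p \<in> B \<times> A" using a b \<open>fst p \<in> Y\<close> \<open>snd p \<in> Y\<close> by (cases p) auto
    qed
  next
    show "B \<times> A \<subseteq> r ` (A \<times> B)"
    proof
      fix p assume p: "p \<in> B \<times> A"
      then obtain c d where cd: "p = (c, d)" "c \<in> Y" "d \<in> Y" "R b c" "R a d" using a b by auto
      then obtain x y where xy: "x \<in> Y" "y \<in> Y" "r (x, y) = (c, d)" using su by blast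
      have "R y c" "R x d" using cl xy by (metis fst_conv snd_conv)+
      hence "R b y" "R a x" using cd xy sy tr a b by meson+
      thus "p \<in> r ` (A \<times> B)" using xy cd a b by force
    qed
  qed
qed

lemma recover:
  assumes gA: "group A" and gM: "group M" and cAM: "carrier A = carrier M"
    and sA: "subgroup J A" and sM: "subgroup J M"
    and x: "x \<in> carrier M" and y: "y \<in> carrier M"
    and c: "c = inv\<^bsub>A\<^esub> x \<otimes>\<^bsub>A\<^esub> (x \<otimes>\<^bsub>M\<^esub> y)"
    and b: "b = inv\<^bsub>M\<^esub> c \<otimes>\<^bsub>M\<^esub> x \<otimes>\<^bsub>M\<^esub> y"
    and cJ: "c \<in> J" and bJ: "b \<in> J"
  shows "x \<in> J \<and> y \<in> J"
proof -
  interpret A: group A by fact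
  interpret M: group M by fact
  have xA: "x \<in> carrier A" using x cAM by simp
  have xyA: "x \<otimes>\<^bsub>M\<^esub> y \<in> carrier A" using x y cAM by (metis M.m_closed)
  have cA: "c \<in> carrier A" using c xA xyA by simp
  hence cM: "c \<in> carrier M" using cAM by simp
  have e1: "x \<otimes>\<^bsub>A\<^esub> c = x \<otimes>\<^bsub>M\<^esub> y" using c xA xyA by (simp add: A.m_assoc[symmetric])
  have e2: "c \<otimes>\<^bsub>M\<^esub> b = x \<otimes>\<^bsub>M\<^esub> y" using b cM x y by (simp add: M.m_assoc[symmetric])
  have cbJ: "c \<otimes>\<^bsub>M\<^esub> b \<in> J" using sM cJ bJ by (simp add: subgroup.m_closed)
  have "x = (x \<otimes>\<^bsub>A\<^esub> c) \<otimes>\<^bsub>A\<^esub> inv\<^bsub>A\<^esub> c" using xA cA by (simp add: A.m_assoc)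
  also have "\<dots> = (c \<otimes>\<^bsub>M\<^esub> b) \<otimes>\<^bsub>A\<^esub> inv\<^bsub>A\<^esub> c" using e1 e2 by simp
  finally have xJ: "x \<in> J" using sA cbJ cJ by (metis subgroup.m_closed subgroup.m_inv_closed)
  have "y = inv\<^bsub>M\<^esub> x \<otimes>\<^bsub>M\<^esub> (x \<otimes>\<^bsub>M\<^esub> y)" using x y by (simp add: M.m_assoc[symmetric])
  also have "\<dots> = inv\<^bsub>M\<^esub> x \<otimes>\<^bsub>M\<^esub> (c \<otimes>\<^bsub>M\<^esub> b)" using e2 by simp
  finally have "y \<in> J" using sM cbJ xJ by (metis subgroup.m_closed subgroup.m_inv_closed)
  with xJ show ?thesis by simp
qed

lemma main_level:
  fixes \<iota> :: "'a \<Rightarrow> 'b"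
  assumes gA: "group A" and gM: "group M" and cAM: "carrier A = carrier M"
    and JM: "J \<subseteq> carrier M"
    and nA: "normal K (A\<lparr>carrier := J\<rparr>)" and nM: "normal K (M\<lparr>carrier := J\<rparr>)"
    and ab: "abelian_quotient (A\<lparr>carrier := J\<rparr>) (M\<lparr>carrier := J\<rparr>) K"
    and bij: "bij_betw r (X \<times> X) (X \<times> X)"
    and iX: "\<forall>x\<in>X. \<iota> x \<in> carrier M"
    and compat: "\<forall>x\<in>X. \<forall>y\<in>X. brace_solution A M (\<iota> x, \<iota> y)
                   = (\<iota> (fst (r (x, y))), \<iota> (snd (r (x, y))))"
  shows "P_decomposable {x\<in>X. \<iota> x \<in> J} r
     ((\<lambda>x. {y\<in>{x\<in>X. \<iota> x \<in> J}. inv\<^bsub>A\<^esub> (\<iota> x) \<otimes>\<^bsub>A\<^esub> \<iota> y \<in> K}) ` {x\<in>X. \<iota> x \<in> J})"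
proof -
  interpret A: group A by fact
  interpret M: group M by fact
  define GA where "GA = A\<lparr>carrier := J\<rparr>"
  define GM where "GM = M\<lparr>carrier := J\<rparr>"
  interpret NA: normal K GA using nA GA_def by simp
  interpret NM: normal K GM using nM GM_def by simp
  have gGA: "group GA" and gGM: "group GM" by unfold_locales
  have sA: "subgroup J A" using A.group_incl_imp_subgroup[of J] JM cAM gGA GA_def by simp
  have sM: "subgroup J M" using M.group_incl_imp_subgroup[of J] JM gGM GM_def by simp
  have cGA: "carrier GA = J" "carrier GM = J" using GA_def GM_def by auto
  have mGA: "\<And>a b. a \<otimes>\<^bsub>GA\<^esub> b = a \<otimes>\<^bsub>A\<^esub> b" "\<And>a b. a \<otimes>\<^bsub>GM\<^esub> b = a \<otimes>\<^bsub>M\<^esub> b"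
    using GA_def GM_def by auto
  have iGA: "\<And>a. a \<in> J \<Longrightarrow> inv\<^bsub>GA\<^esub> a = inv\<^bsub>A\<^esub> a" using sA GA_def by simp
  have iGM: "\<And>a. a \<in> J \<Longrightarrow> inv\<^bsub>GM\<^esub> a = inv\<^bsub>M\<^esub> a" using sM GM_def by simp
  have ab': "abelian_quotient GA GM K" using ab GA_def GM_def by simp
  have cJ: "carrier GA = carrier GM" using cGA by simp
  define Y where "Y = {x\<in>X. \<iota> x \<in> J}"
  define R where "R = (\<lambda>x y. inv\<^bsub>A\<^esub> (\<iota> x) \<otimes>\<^bsub>A\<^esub> \<iota> y \<in> K)"
  have RG: "\<And>x y. x \<in> Y \<Longrightarrow> R x y = (inv\<^bsub>GA\<^esub> (\<iota> x) \<otimes>\<^bsub>GA\<^esub> \<iota> y \<in> K)"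
    unfolding R_def Y_def using iGA mGA by simp
  have YJ: "\<And>x. x \<in> Y \<Longrightarrow> \<iota> x \<in> carrier GA" using Y_def cGA by simp
  have rf: "\<forall>x\<in>Y. R x x" using RG YJ by simp
  have sy: "\<forall>x\<in>Y. \<forall>y\<in>Y. R x y \<longrightarrow> R y x" using RG YJ NA.eqv_sym by blast
  have tr: "\<forall>x\<in>Y. \<forall>y\<in>Y. \<forall>z\<in>Y. R x y \<longrightarrow> R y z \<longrightarrow> R x z" using RG YJ NA.eqv_trans by blast
  have rX: "\<And>x y. x \<in> X \<Longrightarrow> y \<in> X \<Longrightarrow> fst (r (x, y)) \<in> X \<and> snd (r (x, y)) \<in> X"
  proof -
    fix x y assume "x \<in> X" "y \<in> X"
    hence "r (x, y) \<in> X \<times> X" using bij_betw_apply[OF bij, of "(x, y)"] by blast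
    thus "fst (r (x, y)) \<in> X \<and> snd (r (x, y)) \<in> X" by (simp add: mem_Times_iff)
  qed
  have comp: "\<And>x y. x \<in> X \<Longrightarrow> y \<in> X \<Longrightarrow>
      \<iota> (fst (r (x, y))) = inv\<^bsub>A\<^esub> (\<iota> x) \<otimes>\<^bsub>A\<^esub> (\<iota> x \<otimes>\<^bsub>M\<^esub> \<iota> y) \<and>
      \<iota> (snd (r (x, y))) = inv\<^bsub>M\<^esub> (\<iota> (fst (r (x, y)))) \<otimes>\<^bsub>M\<^esub> \<iota> x \<otimes>\<^bsub>M\<^esub> \<iota> y"
  proof -
    fix x y assume "x \<in> X" "y \<in> X"
    hence e: "brace_solution A M (\<iota> x, \<iota> y) = (\<iota> (fst (r (x, y))), \<iota> (snd (r (x, y))))" using compat by blast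
    thus "?thesis x y" unfolding brace_solution_def brace_lambda_def by auto
  qed
  have cl: "\<forall>x\<in>Y. \<forall>y\<in>Y. fst (r (x, y)) \<in> Y \<and> snd (r (x, y)) \<in> Y \<and>
               R y (fst (r (x, y))) \<and> R x (snd (r (x, y)))"
  proof (intro ballI)
    fix x y assume x: "x \<in> Y" and y: "y \<in> Y"
    define u where "u = fst (r (x, y))"
    define v where "v = snd (r (x, y))"
    have xX: "x \<in> X" "y \<in> X" using x y Y_def by auto
    have uv: "u \<in> X" "v \<in> X" using rX xX u_def v_def by auto
    have xJ: "\<iota> x \<in> J" "\<iota> y \<in> J" using x y Y_def by auto
    have cu: "\<iota> u = inv\<^bsub>GA\<^esub> (\<iota> x) \<otimes>\<^bsub>GA\<^esub> (\<iota> x \<otimes>\<^bsub>GM\<^esub> \<iota> y)"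
      using comp[OF xX] u_def iGA xJ mGA by simp
    have uJ: "\<iota> u \<in> J" using cu xJ cGA by (metis NA.inv_closed NA.m_closed NM.m_closed)
    have cv: "\<iota> v = inv\<^bsub>GM\<^esub> (\<iota> u) \<otimes>\<^bsub>GM\<^esub> \<iota> x \<otimes>\<^bsub>GM\<^esub> \<iota> y"
      using comp[OF xX] u_def v_def iGM uJ mGA by simp
    have vJ: "\<iota> v \<in> J" using cv xJ uJ cGA by (metis NM.inv_closed NM.m_closed)
    have xGM: "\<iota> x \<in> carrier GM" "\<iota> y \<in> carrier GM" using xJ cGA by auto
    have "normal K GA" "normal K GM" using nA nM GA_def GM_def by simp_all
    note L = level[OF gGA gGM cJ this ab' xGM cu cv]
    have "u \<in> Y" "v \<in> Y" using uv uJ vJ Y_def by auto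
    thus "fst (r (x, y)) \<in> Y \<and> snd (r (x, y)) \<in> Y \<and> R y (fst (r (x, y))) \<and> R x (snd (r (x, y)))"
      using L RG x y u_def v_def by simp
  qed
  have su: "\<forall>c\<in>Y. \<forall>b\<in>Y. \<exists>x\<in>Y. \<exists>y\<in>Y. r (x, y) = (c, b)"
  proof (intro ballI)
    fix c b assume c: "c \<in> Y" and b: "b \<in> Y"
    hence "(c, b) \<in> X \<times> X" using Y_def by auto
    hence "(c, b) \<in> r ` (X \<times> X)" using bij_betw_imp_surj_on[OF bij] by simp
    then obtain p where p: "p \<in> X \<times> X" "(c, b) = r p" by (rule imageE)
    obtain x y where pxy: "p = (x, y)" by (cases p)
    have xy: "x \<in> X" "y \<in> X" "r (x, y) = (c, b)" using p pxy by auto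
    have h: "\<iota> c = inv\<^bsub>A\<^esub> (\<iota> x) \<otimes>\<^bsub>A\<^esub> (\<iota> x \<otimes>\<^bsub>M\<^esub> \<iota> y)"
       "\<iota> b = inv\<^bsub>M\<^esub> (\<iota> c) \<otimes>\<^bsub>M\<^esub> \<iota> x \<otimes>\<^bsub>M\<^esub> \<iota> y"
      using comp[OF xy(1,2)] xy(3) by simp_all
    have cbJ: "\<iota> c \<in> J" "\<iota> b \<in> J" using c b Y_def by auto
    have ixy: "\<iota> x \<in> carrier M" "\<iota> y \<in> carrier M" using iX xy by auto
    have "\<iota> x \<in> J \<and> \<iota> y \<in> J"
      by (rule recover[OF gA gM cAM sA sM ixy h cbJ])
    thus "\<exists>x\<in>Y. \<exists>y\<in>Y. r (x, y) = (c, b)" using xy Y_def by auto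
  qed
  show ?thesis using classes_decomp[OF rf sy tr cl su] unfolding R_def Y_def .
qed

lemma sub_of_restr:
  assumes "group A" "J \<subseteq> carrier A" "normal K (A\<lparr>carrier := J\<rparr>)"
  shows "subgroup K A"
proof -
  have s: "subgroup K (A\<lparr>carrier := J\<rparr>)" and g: "group (A\<lparr>carrier := J\<rparr>)"
    using assms(3) unfolding normal_def by auto
  have "group ((A\<lparr>carrier := J\<rparr>)\<lparr>carrier := K\<rparr>)" using subgroup.subgroup_is_group[OF s g] .
  hence "group (A\<lparr>carrier := K\<rparr>)" by simp
  moreover have "K \<subseteq> carrier A" using subgroup.subset[OF s] assms(2) by auto
  ultimately show ?thesis using group.group_incl_imp_subgroup[OF assms(1)] by blast
qed

lemma chain_mono:
  fixes n j k :: nat and I :: "nat \<Rightarrow> 'b set"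
  assumes "\<forall>i. 1 \<le> i \<and> i \<le> n \<longrightarrow> I i \<subseteq> I (i - 1)"
  shows "j \<le> k \<Longrightarrow> k \<le> n \<Longrightarrow> I k \<subseteq> I j"
proof (induction k)
  case 0 thus ?case by simp
next
  case (Suc k)
  show ?case
  proof (cases "j = Suc k")
    case True thus ?thesis by simp
  next
    case False
    hence "I k \<subseteq> I j" using Suc by simp
    moreover have "I (Suc k) \<subseteq> I k" using assms Suc.prems by (metis diff_Suc_1 le_add1 plus_1_eq_Suc)
    ultimately show ?thesis by blast
  qed
qed

theorem theoremD:
  fixes X :: "'a set" and r :: "'a \<times> 'a \<Rightarrow> 'a \<times> 'a"
    and A :: "('a \<times> bool) list set monoid"
    and I :: "nat \<Rightarrow> ('a \<times> bool) list set set" and n :: nat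
  assumes sol: "nondeg_solution X r"
    and brace: "skew_brace A (structure_group X r)"
    and compat: "\<forall>x\<in>X. \<forall>y\<in>X.
        brace_solution A (structure_group X r) (sg_iota X r x, sg_iota X r y)
        = (sg_iota X r (fst (r (x, y))), sg_iota X r (snd (r (x, y))))"
    and inj: "inj_on (sg_iota X r) X"
    and sol_brace: "soluble_brace A (structure_group X r)"
    and n_pos: "1 \<le> n"
    and chain: "soluble_chain A (structure_group X r) I n"
    and meet: "sg_iota X r ` X \<inter> I (n - 1) \<noteq> {}"
  shows "multidecomposable X r"
proof -
  define M where "M = structure_group X r"
  define \<iota> where "\<iota> = sg_iota X r"
  have gA: "group A" and gM: "group M" and cAM: "carrier A = carrier M"
    using brace unfolding skew_brace_def M_def by auto
  interpret A: group A by fact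
  have bij: "bij_betw r (X \<times> X) (X \<times> X)" using sol unfolding nondeg_solution_def by auto
  have iX: "\<forall>x\<in>X. \<iota> x \<in> carrier M"
    unfolding \<iota>_def M_def sg_iota_def structure_group_def words_on_def by auto
  have compat': "\<forall>x\<in>X. \<forall>y\<in>X. brace_solution A M (\<iota> x, \<iota> y)
                   = (\<iota> (fst (r (x, y))), \<iota> (snd (r (x, y))))" using compat M_def \<iota>_def by simp
  have I0: "I 0 = carrier M" and In: "I n = {\<one>\<^bsub>M\<^esub>}" using chain unfolding soluble_chain_def M_def by auto
  have ch: "\<And>i. 1 \<le> i \<Longrightarrow> i \<le> n \<Longrightarrow> I i \<subseteq> I (i - 1) \<and>
        brace_ideal (A\<lparr>carrier := I (i - 1)\<rparr>) (M\<lparr>carrier := I (i - 1)\<rparr>) (I i) \<and>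
        abelian_quotient (A\<lparr>carrier := I (i - 1)\<rparr>) (M\<lparr>carrier := I (i - 1)\<rparr>) (I i)"
    using chain unfolding soluble_chain_def M_def by blast
  have mono: "\<And>j k. j \<le> k \<Longrightarrow> k \<le> n \<Longrightarrow> I k \<subseteq> I j"
    using chain_mono[of n I] ch by blast
  obtain x0 where x0: "x0 \<in> X" "\<iota> x0 \<in> I (n - 1)" using meet \<iota>_def by blast
  define Y where "Y = (\<lambda>i. {x\<in>X. \<iota> x \<in> I i})"
  define Xs where "Xs = (\<lambda>k. if k < n then Y k else {x0})"
  have step: "\<And>i. i < n \<Longrightarrow> Xs (Suc i) \<subseteq> Xs i \<and> (\<exists>P. P_decomposable (Xs i) r P \<and> Xs (Suc i) \<in> P)"
  proof -
    fix i assume i: "i < n"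
    have c: "I (Suc i) \<subseteq> I i \<and>
        brace_ideal (A\<lparr>carrier := I i\<rparr>) (M\<lparr>carrier := I i\<rparr>) (I (Suc i)) \<and>
        abelian_quotient (A\<lparr>carrier := I i\<rparr>) (M\<lparr>carrier := I i\<rparr>) (I (Suc i))"
      using ch[of "Suc i"] i by simp
    have nA: "normal (I (Suc i)) (A\<lparr>carrier := I i\<rparr>)" and nM: "normal (I (Suc i)) (M\<lparr>carrier := I i\<rparr>)"
      using c unfolding brace_ideal_def by auto
    have JM: "I i \<subseteq> carrier M" using mono[of 0 i] i I0 by simp
    define P where "P = (\<lambda>x. {y\<in>{x\<in>X. \<iota> x \<in> I i}. inv\<^bsub>A\<^esub> (\<iota> x) \<otimes>\<^bsub>A\<^esub> \<iota> y \<in> I (Suc i)}) ` {x\<in>X. \<iota> x \<in> I i}"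
    have dec: "P_decomposable (Y i) r P"
      using main_level[OF gA gM cAM JM nA nM _ bij iX compat'] c unfolding P_def Y_def by blast
    have subK: "subgroup (I (Suc i)) A" using sub_of_restr[OF gA _ nA] JM cAM by simp
    have "i \<le> n - 1" using i by simp
    hence "I (n - 1) \<subseteq> I i" using mono[of i "n - 1"] by simp
    hence x0Y: "x0 \<in> Y i" using x0 Y_def by auto
    have x0A: "\<iota> x0 \<in> carrier A" using iX x0 cAM by auto
    have cls: "Xs (Suc i) = {y\<in>Y i. inv\<^bsub>A\<^esub> (\<iota> x0) \<otimes>\<^bsub>A\<^esub> \<iota> y \<in> I (Suc i)}"
    proof (cases "Suc i < n")
      case True
      have "Suc i \<le> n - 1" using True by simp
      hence "I (n - 1) \<subseteq> I (Suc i)" using mono[of "Suc i" "n - 1"] by simp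
      hence x0K: "\<iota> x0 \<in> I (Suc i)" using x0 by auto
      have "\<And>y. y \<in> Y i \<Longrightarrow> (inv\<^bsub>A\<^esub> (\<iota> x0) \<otimes>\<^bsub>A\<^esub> \<iota> y \<in> I (Suc i)) = (\<iota> y \<in> I (Suc i))"
      proof -
        fix y assume y: "y \<in> Y i"
        have yA: "\<iota> y \<in> carrier A" using y Y_def iX cAM by auto
        show "(inv\<^bsub>A\<^esub> (\<iota> x0) \<otimes>\<^bsub>A\<^esub> \<iota> y \<in> I (Suc i)) = (\<iota> y \<in> I (Suc i))"
        proof
          assume "inv\<^bsub>A\<^esub> (\<iota> x0) \<otimes>\<^bsub>A\<^esub> \<iota> y \<in> I (Suc i)"
          hence "\<iota> x0 \<otimes>\<^bsub>A\<^esub> (inv\<^bsub>A\<^esub> (\<iota> x0) \<otimes>\<^bsub>A\<^esub> \<iota> y) \<in> I (Suc i)"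
            using x0K subK by (simp add: subgroup.m_closed)
          thus "\<iota> y \<in> I (Suc i)" using x0A yA by (simp add: A.m_assoc[symmetric])
        next
          assume "\<iota> y \<in> I (Suc i)"
          thus "inv\<^bsub>A\<^esub> (\<iota> x0) \<otimes>\<^bsub>A\<^esub> \<iota> y \<in> I (Suc i)"
            using x0K subK by (simp add: subgroup.m_closed subgroup.m_inv_closed)
        qed
      qed
      moreover have "Y (Suc i) = {y\<in>Y i. \<iota> y \<in> I (Suc i)}" using Y_def c by auto
      ultimately show ?thesis using True Xs_def by auto
    next
      case False
      hence Sn: "Suc i = n" using i by simp
      have one: "\<one>\<^bsub>A\<^esub> = \<one>\<^bsub>M\<^esub>" using subgroup.one_closed[OF subK] In Sn by simp
      have "\<And>y. y \<in> Y i \<Longrightarrow> (inv\<^bsub>A\<^esub> (\<iota> x0) \<otimes>\<^bsub>A\<^esub> \<iota> y \<in> I (Suc i)) = (y = x0)"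
      proof -
        fix y assume y: "y \<in> Y i"
        have yA: "\<iota> y \<in> carrier A" using y Y_def iX cAM by auto
        have yX: "y \<in> X" using y Y_def by auto
        have "(inv\<^bsub>A\<^esub> (\<iota> x0) \<otimes>\<^bsub>A\<^esub> \<iota> y \<in> I (Suc i)) = (inv\<^bsub>A\<^esub> (\<iota> x0) \<otimes>\<^bsub>A\<^esub> \<iota> y = \<one>\<^bsub>A\<^esub>)"
          using In Sn one by simp
        also have "\<dots> = (\<iota> y = \<iota> x0)"
        proof
          assume "inv\<^bsub>A\<^esub> (\<iota> x0) \<otimes>\<^bsub>A\<^esub> \<iota> y = \<one>\<^bsub>A\<^esub>"
          hence "\<iota> x0 \<otimes>\<^bsub>A\<^esub> (inv\<^bsub>A\<^esub> (\<iota> x0) \<otimes>\<^bsub>A\<^esub> \<iota> y) = \<iota> x0" using x0A by simp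
          thus "\<iota> y = \<iota> x0" using x0A yA by (simp add: A.m_assoc[symmetric])
        next
          assume "\<iota> y = \<iota> x0" thus "inv\<^bsub>A\<^esub> (\<iota> x0) \<otimes>\<^bsub>A\<^esub> \<iota> y = \<one>\<^bsub>A\<^esub>" using x0A by simp
        qed
        also have "\<dots> = (y = x0)" using inj yX x0 \<iota>_def unfolding inj_on_def by blast
        finally show "(inv\<^bsub>A\<^esub> (\<iota> x0) \<otimes>\<^bsub>A\<^esub> \<iota> y \<in> I (Suc i)) = (y = x0)" .
      qed
      thus ?thesis using Sn Xs_def x0Y by auto
    qed
    have XsP: "Xs (Suc i) \<in> P" using cls x0Y unfolding P_def Y_def by blast
    have "Xs i = Y i" using i Xs_def by simp
    moreover have "Xs (Suc i) \<subseteq> Y i" using cls by auto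
    ultimately show "Xs (Suc i) \<subseteq> Xs i \<and> (\<exists>P. P_decomposable (Xs i) r P \<and> Xs (Suc i) \<in> P)"
      using dec XsP by auto
  qed
  have "Xs 0 = X" using n_pos Xs_def Y_def I0 iX by auto
  moreover have "card (Xs n) = 1" using Xs_def by simp
  ultimately show ?thesis unfolding multidecomposable_def using step by blast
qed

end
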